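(* Let $\mathbf p=(p_1,p_2)^T\in\mathbb{Z}^2\setminus\{\mathbf 0\}$ with $\mathbf p\notin\{(\pm1,0)^T,(0,\pm1)^T,(\pm1,\pm1)^T,(\pm1,\pm2)^T,(\pm2,\pm1)^T\}$. (Galerkin) Then there exists $\mathbf a\in\mathbb{Z}^2$ such that, with $\rho_k=\frac1{|\mathbf p|^2}-\frac1{|\mathbf a+k\mathbf p|^2}$, one has $\rho_0<0$ (i.e. $|\mathbf a|<|\mathbf p|$), $\rho_k>0$ for all $k\in\mathbb{Z}\setminus\{0\}$, and $\rho_0+\rho_2<0$ or $\rho_0+\rho_{-2}<0$; in particular, for every positive integer $N$ large enough that $\mathbf a\pm2\mathbf p\in[-N,N]^2$, $\sqrt{-\rho_1(\rho_0+\rho_2)}$ or $\sqrt{-\rho_{-1}(\rho_0+\rho_{-2})}$ is a positive real number and all $\rho_k$ with $\mathbf a+k\mathbf p\in[-N,N]^2$, $k\neq0$, are positive. (Zeitlin) If moreover $\kappa=\gcd(|p_1|,|p_2|)$ is odd, then there exist $\mathbf a\in\mathbb{Z}^2$ and infinitely many (arbitrarily large) positive integers $N$ such that, with $\mathcal D=[-N,N]^2\cap\mathbb{Z}^2$, $\widehat{\mathbf k}$ the element of $\mathcal D$ congruent to $\mathbf k$ modulo $(2N+1)\mathbb{Z}^2$, $n=|\{\widehat{\mathbf a+k\mathbf p}:k\in\mathbb{Z}\}|$ and $\rho_k=\frac1{|\mathbf p|^2}-\frac1{|\widehat{\mathbf a+k\mathbf p}|^2}$, one has $\rho_0<0$,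 $\rho_k>0$ for $k=1,\dots,n-1$, and $\rho_0+\rho_2<0$ or $\rho_0+\rho_{n-2}<0$.
   Context: These are the conditions under which the class of Fourier modes $\{\mathbf a+k\mathbf p\}$ has exactly one mode strictly inside the disc $\{|\mathbf x|<|\mathbf p|\}$ and the explicit lower bound $\sqrt{-\rho_1(\rho_0+\rho_2)}$ (or $\sqrt{-\rho_{-1}(\rho_0+\rho_{-2})}$, resp. $\sqrt{-\rho_{n-1}(\rho_0+\rho_{n-2})}$) for a real eigenvalue of the linearised class matrix is real and positive. *)

theory Defs
  imports Complex_Main
begin

definition nsq :: "int \<times> int \<Rightarrow> real" where
  "nsq x = real_of_int ((fst x)\<^sup>2 + (snd x)\<^sup>2)"

definition mode :: "int \<times> int \<Rightarrow> int \<times> int \<Rightarrow> int \<Rightarrow> int \<times> int" where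
  "mode a p k = (fst a + k * fst p, snd a + k * snd p)"

definition inbox :: "int \<Rightarrow> int \<times> int \<Rightarrow> bool" where
  "inbox N x \<longleftrightarrow> \<bar>fst x\<bar> \<le> N \<and> \<bar>snd x\<bar> \<le> N"

text \<open>The representative in [-N,N]^2 of x modulo (2N+1) Z^2.\<close>
definition hatN :: "int \<Rightarrow> int \<times> int \<Rightarrow> int \<times> int" where
  "hatN N x = ((fst x + N) mod (2 * N + 1) - N, (snd x + N) mod (2 * N + 1) - N)"

definition rhoG :: "int \<times> int \<Rightarrow> int \<times> int \<Rightarrow> int \<Rightarrow> real" where
  "rhoG p a k = 1 / nsq p - 1 / nsq (mode a p k)"

definition rhoZ :: "int \<Rightarrow> int \<times> int \<Rightarrow> int \<times> int \<Rightarrow> int \<Rightarrow> real" where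
  "rhoZ N p a k = 1 / nsq p - 1 / nsq (hatN N (mode a p k))"

definition nclass :: "int \<Rightarrow> int \<times> int \<Rightarrow> int \<times> int \<Rightarrow> nat" where
  "nclass N p a = card ((\<lambda>k. hatN N (mode a p k)) ` (UNIV :: int set))"

end

theory Submission
  imports Defs
begin
definition condI :: "int \<times> int \<Rightarrow> int \<times> int \<Rightarrow> bool" where
  "condI p a = (let A = (fst a)^2 + (snd a)^2; D = fst a * fst p + snd a * snd p;
      P = (fst p)^2 + (snd p)^2; B = A + 4*D + 4*P in
      0 < A \<and> A < P \<and> 2 * \<bar>D\<bar> < A \<and> 2*A*B < P*(A+B))"
definition ffw :: "int \<times> int \<Rightarrow> int \<times> int" where
  "ffw p = (- (snd p div 2), fst p div 2)"
definition cands :: "int \<times> int \<Rightarrow> (int \<times> int) list" where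
  "cands p = [ffw p, (-2,-1), (-1,-2), (-3,0), (-1,2), (-2,-2), (-2,1), (0,-3)]"

lemma fin: "\<forall>p1\<in>set [-9..9]. \<forall>p2\<in>set [-9..9]. (p1,p2)=(0,0) \<or> (\<bar>p1\<bar>,\<bar>p2\<bar>) \<in> {(1, 0), (0, 1), (1, 1), (1, 2), (2, 1)} \<or> (\<exists>a\<in>set (cands (p1,p2)). condI (p1,p2) a)"
  by code_simp

lemma nsq_mode: "nsq (mode a p k) = of_int ((fst a)^2+(snd a)^2 + 2*k*(fst a*fst p + snd a*snd p) + k^2*((fst p)^2+(snd p)^2))"
  by (simp add: nsq_def mode_def power2_eq_square algebra_simps)

lemma int_core:
  fixes A D P k :: int
  assumes "0 < A" "A < P" "2 * \<bar>D\<bar> < A" "k \<noteq> 0"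
  shows "A + 2*k*D + k^2*P > P"
proof (cases "\<bar>k\<bar> = 1")
  case True
  then have "k = 1 \<or> k = -1" by arith
  then show ?thesis using assms by auto
next
  case False
  define K where "K = \<bar>k\<bar>"
  have K2: "K \<ge> 2" using False assms(4) K_def by arith
  have k2: "k^2 = K*K" by (simp add: K_def power2_eq_square abs_mult_self_eq)
  have e: "\<bar>2*k*D\<bar> = 2*K*\<bar>D\<bar>" by (simp add: K_def abs_mult)
  have "2*k*D \<ge> -(2*K*\<bar>D\<bar>)" using e abs_ge_minus_self[of "2*k*D"] by linarith
  moreover have "K*(2*\<bar>D\<bar>) \<le> K*A" using assms(3) K2 by (intro mult_left_mono) auto
  hence "2*K*\<bar>D\<bar> \<le> K*A" by (simp add: algebra_simps)
  moreover have "K*A \<le> K*P" using assms(2) K2 by simp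
  moreover have "K*K*P \<ge> 2*K*P" using K2 assms by (simp add: mult_right_mono)
  moreover have "K*P \<ge> 2*P" using K2 assms by (simp add: mult_right_mono)
  moreover have "k^2*P = K*K*P" using k2 by simp
  ultimately show ?thesis using assms by linarith
qed

lemma rhoG_pos: "nsq (mode a p k) > nsq p \<Longrightarrow> nsq p > 0 \<Longrightarrow> rhoG p a k > 0"
  by (simp add: rhoG_def frac_less2)

lemma core:
  assumes "condI p a"
  shows "rhoG p a 0 < 0" "\<And>k. k \<noteq> 0 \<Longrightarrow> nsq (mode a p k) > nsq p"
    "\<And>k. k \<noteq> 0 \<Longrightarrow> rhoG p a k > 0" "rhoG p a 0 + rhoG p a 2 < 0" "nsq p > 0"
    "nsq a > 0"
proof -
  define A where "A = (fst a)^2 + (snd a)^2"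
  define D where "D = fst a * fst p + snd a * snd p"
  define P where "P = (fst p)^2 + (snd p)^2"
  define B where "B = A + 4*D + 4*P"
  have c: "0 < A" "A < P" "2 * \<bar>D\<bar> < A" "2*A*B < P*(A+B)"
    using assms unfolding condI_def Let_def A_def D_def P_def B_def by auto
  have nm: "nsq (mode a p k) = of_int (A + 2*k*D + k^2*P)" for k
    by (simp add: nsq_mode A_def D_def P_def)
  have np: "nsq p = of_int P" by (simp add: nsq_def P_def)
  have na: "nsq a = of_int A" using nm[of 0] by (simp add: mode_def)
  show "nsq p > 0" "nsq a > 0" using np na c by auto
  show nk: "nsq (mode a p k) > nsq p" if "k \<noteq> 0" for k
    using int_core[OF c(1-3) that] by (simp only: nm np of_int_less_iff)
  show "rhoG p a k > 0" if "k \<noteq> 0" for k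
    using rhoG_pos nk[OF that] np c by auto
  have m0: "mode a p 0 = a" by (simp add: mode_def)
  show "rhoG p a 0 < 0" using na np c by (simp add: rhoG_def m0 frac_less2)
  have Bp: "B > 0" using c B_def by linarith
  have nb: "nsq (mode a p 2) = of_int B" using nm[of 2] by (simp add: B_def)
  have "2 * real_of_int A * real_of_int B < real_of_int P * (real_of_int A + real_of_int B)"
    using c(4) by (metis of_int_add of_int_mult of_int_less_iff of_int_numeral)
  then have "2 / real_of_int P < 1 / real_of_int A + 1 / real_of_int B"
    using c Bp by (simp add: field_simps)
  then show "rhoG p a 0 + rhoG p a 2 < 0"
    by (simp add: rhoG_def m0 na np nb)
qed

lemma bigcase:
  assumes "\<bar>fst p div 2\<bar> + \<bar>snd p div 2\<bar> \<ge> 5"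
  shows "condI p (ffw p)"
proof -
  obtain p1 p2 where p: "p = (p1, p2)" by (cases p)
  define u where "u = p1 div 2"
  define v where "v = p2 div 2"
  define r1 where "r1 = p1 mod 2"
  define r2 where "r2 = p2 mod 2"
  have p1: "p1 = 2*u + r1" and p2: "p2 = 2*v + r2" by (simp_all add: u_def v_def r1_def r2_def)
  have r: "0 \<le> r1" "r1 \<le> 1" "0 \<le> r2" "r2 \<le> 1" by (simp_all add: r1_def r2_def)
  define s where "s = \<bar>u\<bar>"
  define t where "t = \<bar>v\<bar>"
  have st: "s + t \<ge> 5" using assms by (simp add: p u_def v_def s_def t_def)
  define A where "A = u^2 + v^2"
  define D where "D = u*r2 - v*r1"
  define P where "P = p1^2 + p2^2"
  define B where "B = A + 4*D + 4*P"
  have As: "A = s*s + t*t" by (simp add: A_def s_def t_def power2_eq_square abs_mult_self_eq)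
  have sq: "2*(s*s+t*t) \<ge> (s+t)*(s+t)" proof -
    have "0 \<le> (s-t)*(s-t)" by simp
    thus ?thesis by (simp add: algebra_simps)
  qed
  have "(s+t)*(s+t) \<ge> 5*(s+t)" using st by (intro mult_right_mono) auto
  hence "5*(s+t) \<le> 2*A" using sq As by (metis order_trans)
  hence key: "A > 2*(s+t)" using st by presburger
  have ml: "\<bar>x*r\<bar> \<le> \<bar>x\<bar>" if "0 \<le> r" "r \<le> 1" for x r :: int
  proof -
    have "\<bar>x\<bar>*r \<le> \<bar>x\<bar>*1" using that by (intro mult_left_mono) auto
    thus ?thesis using that by (simp add: abs_mult)
  qed
  have ur: "\<bar>u*r2\<bar> \<le> s" "\<bar>v*r1\<bar> \<le> t"
    using r ml by (simp_all add: s_def t_def)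
  have Dle: "\<bar>D\<bar> \<le> s + t" using ur unfolding D_def by linarith
  have Pe: "P = 4*A + 4*(u*r1 + v*r2) + r1*r1 + r2*r2"
    by (simp add: P_def A_def p1 p2 power2_eq_square algebra_simps)
  have ur2: "\<bar>u*r1\<bar> \<le> s" "\<bar>v*r2\<bar> \<le> t"
    using r ml by (simp_all add: s_def t_def)
  have rr: "r1*r1 \<ge> 0" "r2*r2 \<ge> 0" by simp_all
  have "-s \<le> u*r1" "-t \<le> v*r2" using ur2 by (simp_all add: abs_le_iff)
  then have P2A: "P > 2*A" using Pe rr key by (smt (verit))
  have c1a: "0 < A" using key st by arith
  have c1b: "A < P" using c1a P2A by arith
  have c1c: "2*\<bar>D\<bar> < A" using key Dle by arith
  note c1 = c1a c1b c1c
  have Bp: "B > 0" using c1 B_def by linarith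
  have "2*A*B < P*B" using P2A Bp by simp
  also have "\<dots> \<le> P*(A+B)" using c1 by (simp add: algebra_simps)
  finally have c4: "2*A*B < P*(A+B)" .
  have fw: "ffw p = (-v, u)" by (simp add: ffw_def p u_def v_def)
  have Dd: "D = fst (ffw p) * fst p + snd (ffw p) * snd p"
  proof -
    have "D = (-v)*p1 + u*p2" unfolding D_def by (subst p1, subst p2) (simp add: algebra_simps)
    thus ?thesis using fw[unfolded p] by (simp add: p)
  qed
  have Ad: "A = (fst (ffw p))^2 + (snd (ffw p))^2"
    using fw[unfolded p] by (simp add: A_def p)
  have Pd: "P = (fst p)^2 + (snd p)^2" by (simp add: P_def p)
  show ?thesis unfolding condI_def Let_def Ad[symmetric] Dd[symmetric] Pd[symmetric] B_def[symmetric]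
    using c1 c4 by simp
qed

lemma exists_a:
  fixes p :: "int \<times> int"
  assumes "p \<noteq> (0, 0)"
    and "(\<bar>fst p\<bar>, \<bar>snd p\<bar>) \<notin> {(1, 0), (0, 1), (1, 1), (1, 2), (2, 1)}"
  shows "\<exists>a. condI p a"
proof (cases "\<bar>fst p div 2\<bar> + \<bar>snd p div 2\<bar> \<ge> 5")
  case True then show ?thesis using bigcase by blast
next
  case False
  obtain p1 p2 where p: "p = (p1, p2)" by (cases p)
  have b: "\<bar>p1 div 2\<bar> \<le> 4" "\<bar>p2 div 2\<bar> \<le> 4" using False by (simp_all add: p)
  have "p1 = 2*(p1 div 2) + p1 mod 2" "p2 = 2*(p2 div 2) + p2 mod 2" by simp_all
  moreover have "0 \<le> p1 mod 2" "p1 mod 2 \<le> 1" "0 \<le> p2 mod 2" "p2 mod 2 \<le> 1" by simp_all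
  ultimately have "-9 \<le> p1 \<and> p1 \<le> 9 \<and> -9 \<le> p2 \<and> p2 \<le> 9" using b by linarith
  hence "p1 \<in> set [-9..9]" "p2 \<in> set [-9..9]" by (simp_all only: set_upto atLeastAtMost_iff)
  with fin have "(p1,p2)=(0,0) \<or> (\<bar>p1\<bar>,\<bar>p2\<bar>) \<in> {(1, 0), (0, 1), (1, 1), (1, 2), (2, 1)} \<or> (\<exists>a\<in>set (cands (p1,p2)). condI (p1,p2) a)"
    by blast
  then show ?thesis using assms p by auto
qed

lemma hat_cong:
  assumes "(2*N+1) dvd (fst x - fst y)" "(2*N+1) dvd (snd x - snd y)"
  shows "hatN N x = hatN N y"
proof -
  have "(fst x + N) mod (2*N+1) = (fst y + N) mod (2*N+1)"
    using assms(1) by (simp add: mod_eq_dvd_iff)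
  moreover have "(snd x + N) mod (2*N+1) = (snd y + N) mod (2*N+1)"
    using assms(2) by (simp add: mod_eq_dvd_iff)
  ultimately show ?thesis by (simp add: hatN_def)
qed

lemma hat_cong_rev:
  assumes "hatN N x = hatN N y"
  shows "(2*N+1) dvd (fst x - fst y)" "(2*N+1) dvd (snd x - snd y)"
proof -
  have "(fst x + N) mod (2*N+1) = (fst y + N) mod (2*N+1)"
    "(snd x + N) mod (2*N+1) = (snd y + N) mod (2*N+1)"
    using assms by (simp_all add: hatN_def)
  then show "(2*N+1) dvd (fst x - fst y)" "(2*N+1) dvd (snd x - snd y)"
    by (simp_all add: mod_eq_dvd_iff)
qed

lemma hat_id:
  assumes "inbox N x"
  shows "hatN N x = x"
  using assms by (simp add: hatN_def inbox_def mod_pos_pos_trivial abs_le_iff prod_eq_iff)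

lemma hat_form:
  "hatN N x = (fst x + (2*N+1) * (- ((fst x + N) div (2*N+1))), snd x + (2*N+1) * (- ((snd x + N) div (2*N+1))))"
proof -
  have "(y + N) mod (2*N+1) - N = y + (2*N+1) * (- ((y + N) div (2*N+1)))" for y :: int
    using minus_mult_div_eq_mod[of "y+N" "2*N+1"] by (simp add: algebra_simps)
  then show ?thesis by (simp add: hatN_def)
qed

lemma lagrange:
  fixes x1 x2 p1 p2 :: int
  shows "(x1^2+x2^2)*(p1^2+p2^2) = (x1*p1+x2*p2)^2 + (x1*p2-x2*p1)^2"
  by (simp add: power2_eq_square algebra_simps)

lemma zeit_key:
  fixes p a :: "int \<times> int" and N m :: int
  assumes ca: "condI p a"
    and kap: "gcd (fst p) (snd p) * m = 2*N+1"
    and big: "\<bar>fst a * snd p - snd a * fst p\<bar> + ((fst p)^2 + (snd p)^2) + 1 \<le> 2*N+1"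
  shows "hatN N (mode a p k) = a \<or> nsq (hatN N (mode a p k)) > nsq p"
proof -
  obtain p1 p2 where p: "p = (p1,p2)" by (cases p)
  obtain a1 a2 where a: "a = (a1,a2)" by (cases a)
  define M where "M = 2*N+1"
  define P where "P = p1^2 + p2^2"
  define w1 where "w1 = - ((a1 + k*p1 + N) div M)"
  define w2 where "w2 = - ((a2 + k*p2 + N) div M)"
  define x1 where "x1 = a1 + k*p1 + M*w1"
  define x2 where "x2 = a2 + k*p2 + M*w2"
  have hx: "hatN N (mode a p k) = (x1, x2)"
    by (subst hat_form) (simp add: mode_def p a x1_def x2_def w1_def w2_def M_def)
  have np: "nsq p = of_int P" by (simp add: nsq_def p P_def)
  have Ppos: "P > 0" using core(5)[OF ca] np by simp
  have bigM: "\<bar>a1*p2 - a2*p1\<bar> + P + 1 \<le> M" using big by (simp add: M_def P_def p a)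
  have Mpos: "M > 0" using bigM Ppos abs_ge_zero[of "a1*p2 - a2*p1"] by arith
  show ?thesis
  proof (cases "w1*p2 - w2*p1 = 0")
    case False
    define c where "c = w1*p2 - w2*p1"
    define ca' where "ca' = a1*p2 - a2*p1"
    have Cx: "x1*p2 - x2*p1 = ca' + M*c"
      by (simp add: x1_def x2_def ca'_def c_def algebra_simps)
    have "\<bar>M*c\<bar> \<ge> M"
    proof -
      have "\<bar>c\<bar> \<ge> 1" using False c_def by simp
      moreover note Mpos
      ultimately have "M*1 \<le> M*\<bar>c\<bar>" by (intro mult_left_mono) auto
      thus ?thesis using \<open>M > 0\<close> by (simp add: abs_mult)
    qed
    moreover have "\<bar>ca'\<bar> + P + 1 \<le> M" using bigM by (simp add: ca'_def)
    moreover have "\<bar>M*c\<bar> \<le> \<bar>ca' + M*c\<bar> + \<bar>ca'\<bar>"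
      using abs_triangle_ineq[of "ca' + M*c" "-ca'"] by simp
    ultimately have ge: "\<bar>x1*p2 - x2*p1\<bar> \<ge> P + 1" unfolding Cx by linarith
    have "(P+1)*(P+1) \<le> \<bar>x1*p2 - x2*p1\<bar> * \<bar>x1*p2 - x2*p1\<bar>"
      using ge Ppos by (intro mult_mono) auto
    also have "\<dots> = (x1*p2 - x2*p1)^2" by (simp add: power2_eq_square abs_mult_self_eq)
    also have "\<dots> \<le> (x1^2+x2^2)*P" unfolding P_def lagrange by simp
    finally have "(P+1)*(P+1) \<le> (x1^2+x2^2)*P" .
    moreover have "P*P < (P+1)*(P+1)" using Ppos by (simp add: algebra_simps)
    ultimately have "P * P < (x1^2+x2^2)*P" by linarith
    hence lt: "P < x1^2+x2^2" using Ppos by simp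
    have "nsq (hatN N (mode a p k)) > nsq p"
      unfolding hx np nsq_def fst_conv snd_conv using lt by (simp only: of_int_less_iff P_def p fst_conv snd_conv)
    thus ?thesis by simp
  next
    case True
    define g where "g = gcd p1 p2"
    obtain u1 u2 where uu: "u1*p1 + u2*p2 = g" using bezout_int[of p1 p2] g_def by auto
    define s where "s = u1*w1 + u2*w2"
    have e: "w1*p2 = w2*p1" using True by simp
    have s1: "g*w1 = s*p1"
    proof -
      have "s*p1 = u1*w1*p1 + u2*(w2*p1)" by (simp add: s_def algebra_simps)
      also have "\<dots> = u1*w1*p1 + u2*(w1*p2)" using e by simp
      also have "\<dots> = w1*(u1*p1 + u2*p2)" by (simp add: algebra_simps)
      finally have "s*p1 = w1*g" unfolding uu .
      thus ?thesis by (simp add: mult.commute)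
    qed
    have s2: "g*w2 = s*p2"
    proof -
      have "s*p2 = u1*(w1*p2) + u2*w2*p2" by (simp add: s_def algebra_simps)
      also have "\<dots> = u1*(w2*p1) + u2*w2*p2" using e by simp
      also have "\<dots> = w2*(u1*p1 + u2*p2)" by (simp add: algebra_simps)
      finally have "s*p2 = w2*g" unfolding uu .
      thus ?thesis by (simp add: mult.commute)
    qed
    have Mg: "M = g*m" using kap by (simp add: M_def g_def p)
    define j where "j = k + m*s"
    have "M*w1 = m*(g*w1)" by (simp add: Mg algebra_simps)
    hence "M*w1 = m*s*p1" using s1 by simp
    moreover have "M*w2 = m*(g*w2)" by (simp add: Mg algebra_simps)
    hence "M*w2 = m*s*p2" using s2 by simp
    ultimately have xm: "(x1,x2) = mode a p j"
      by (simp add: x1_def x2_def mode_def a p j_def algebra_simps)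
    show ?thesis
    proof (cases "j = 0")
      case True
      then show ?thesis using hx xm by (simp add: mode_def)
    next
      case False
      then show ?thesis using core(2)[OF ca False] hx xm by simp
    qed
  qed
qed

lemma nclass_le:
  assumes h: "hatN N (mode a p k) = a" and k: "k \<ge> 1" and ib: "inbox N a"
  shows "int (nclass N p a) \<le> k"
proof -
  define f where "f = (\<lambda>j. hatN N (mode a p j))"
  have ha: "hatN N a = a" using hat_id[OF ib] .
  have "hatN N (mode a p k) = hatN N a" using h ha by simp
  from hat_cong_rev[OF this] have d1: "(2*N+1) dvd (k * fst p)" and d2: "(2*N+1) dvd (k * snd p)"
    by (simp_all add: mode_def)
  have fj: "f j = f (j mod k)" for j
  proof -
    have e: "j - j mod k = (j div k) * k" by (simp add: minus_mod_eq_mult_div algebra_simps)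
    have "(2*N+1) dvd ((j div k) * (k * fst p))" using d1 by simp
    moreover have "(2*N+1) dvd ((j div k) * (k * snd p))" using d2 by simp
    moreover have "fst (mode a p j) - fst (mode a p (j mod k)) = (j - j mod k) * fst p"
      by (simp add: mode_def algebra_simps)
    moreover have "snd (mode a p j) - snd (mode a p (j mod k)) = (j - j mod k) * snd p"
      by (simp add: mode_def algebra_simps)
    ultimately show ?thesis unfolding f_def e
      by (intro hat_cong) (simp_all add: mult.assoc)
  qed
  have "range f \<subseteq> f ` {0..<k}"
  proof
    fix y assume "y \<in> range f"
    then obtain j where "y = f j" by auto
    moreover have "j mod k \<in> {0..<k}" using k by simp
    ultimately show "y \<in> f ` {0..<k}" using fj by blast
  qed
  hence "card (range f) \<le> card (f ` {0..<k})" by (intro card_mono) auto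
  also have "\<dots> \<le> card {0..<k}" by (rule card_image_le) simp
  finally have "card (range f) \<le> nat k" by simp
  thus ?thesis using k by (simp add: nclass_def f_def)
qed

theorem lemma7:
  fixes p :: "int \<times> int"
  assumes "p \<noteq> (0, 0)"
    and "(\<bar>fst p\<bar>, \<bar>snd p\<bar>) \<notin> {(1, 0), (0, 1), (1, 1), (1, 2), (2, 1)}"
  shows "(\<exists>a :: int \<times> int.
            rhoG p a 0 < 0 \<and>
            (\<forall>k::int. k \<noteq> 0 \<longrightarrow> rhoG p a k > 0) \<and>
            (rhoG p a 0 + rhoG p a 2 < 0 \<or> rhoG p a 0 + rhoG p a (-2) < 0) \<and>
            (\<forall>N::int. N > 0 \<and> inbox N (mode a p 2) \<and> inbox N (mode a p (-2)) \<longrightarrow>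
               (sqrt (- rhoG p a 1 * (rhoG p a 0 + rhoG p a 2)) > 0 \<or>
                sqrt (- rhoG p a (-1) * (rhoG p a 0 + rhoG p a (-2))) > 0) \<and>
               (\<forall>k::int. k \<noteq> 0 \<and> inbox N (mode a p k) \<longrightarrow> rhoG p a k > 0)))
       \<and>
         (odd (gcd \<bar>fst p\<bar> \<bar>snd p\<bar>) \<longrightarrow>
           (\<exists>a :: int \<times> int. infinite {N :: int. N > 0 \<and>
              (\<forall>k::int. hatN N (mode a p k) \<noteq> (0, 0)) \<and>
              rhoZ N p a 0 < 0 \<and>
              (\<forall>k::int. 1 \<le> k \<and> k \<le> int (nclass N p a) - 1 \<longrightarrow> rhoZ N p a k > 0) \<and>
              (rhoZ N p a 0 + rhoZ N p a 2 < 0 \<or>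
               rhoZ N p a 0 + rhoZ N p a (int (nclass N p a) - 2) < 0)}))"
proof -
  obtain a where ca: "condI p a" using exists_a[OF assms] by blast
  note cr = core[OF ca]
  have r1: "rhoG p a 1 > 0" using cr(3)[of 1] by simp
  have sq: "sqrt (- rhoG p a 1 * (rhoG p a 0 + rhoG p a 2)) > 0"
    using r1 cr(4) by (simp add: mult_pos_neg)
  have part1: "rhoG p a 0 < 0 \<and>
            (\<forall>k::int. k \<noteq> 0 \<longrightarrow> rhoG p a k > 0) \<and>
            (rhoG p a 0 + rhoG p a 2 < 0 \<or> rhoG p a 0 + rhoG p a (-2) < 0) \<and>
            (\<forall>N::int. N > 0 \<and> inbox N (mode a p 2) \<and> inbox N (mode a p (-2)) \<longrightarrow>
               (sqrt (- rhoG p a 1 * (rhoG p a 0 + rhoG p a 2)) > 0 \<or>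
                sqrt (- rhoG p a (-1) * (rhoG p a 0 + rhoG p a (-2))) > 0) \<and>
               (\<forall>k::int. k \<noteq> 0 \<and> inbox N (mode a p k) \<longrightarrow> rhoG p a k > 0))"
    using cr(1,3,4) sq by blast
  have part2: "\<exists>a :: int \<times> int. infinite {N :: int. N > 0 \<and>
              (\<forall>k::int. hatN N (mode a p k) \<noteq> (0, 0)) \<and>
              rhoZ N p a 0 < 0 \<and>
              (\<forall>k::int. 1 \<le> k \<and> k \<le> int (nclass N p a) - 1 \<longrightarrow> rhoZ N p a k > 0) \<and>
              (rhoZ N p a 0 + rhoZ N p a 2 < 0 \<or>
               rhoZ N p a 0 + rhoZ N p a (int (nclass N p a) - 2) < 0)}"
    if odd: "odd (gcd \<bar>fst p\<bar> \<bar>snd p\<bar>)"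
  proof (intro exI[of _ a])
    define \<kappa> where "\<kappa> = gcd (fst p) (snd p)"
    have oddk: "odd \<kappa>" using odd by (simp add: \<kappa>_def)
    then obtain c where c: "\<kappa> = 2*c + 1" by (metis oddE)
    have kpos: "\<kappa> > 0" using assms(1) by (simp add: \<kappa>_def prod_eq_iff)
    hence c0: "c \<ge> 0" using c by simp
    define P where "P = (fst p)^2 + (snd p)^2"
    define N0 where "N0 = \<bar>fst a\<bar> + \<bar>snd a\<bar> + 2*\<bar>fst p\<bar> + 2*\<bar>snd p\<bar> + \<bar>fst a * snd p - snd a * fst p\<bar> + P + 1"
    have P0: "P \<ge> 0" by (simp add: P_def)
    define S where "S = {N :: int. N > 0 \<and>
              (\<forall>k::int. hatN N (mode a p k) \<noteq> (0, 0)) \<and>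
              rhoZ N p a 0 < 0 \<and>
              (\<forall>k::int. 1 \<le> k \<and> k \<le> int (nclass N p a) - 1 \<longrightarrow> rhoZ N p a k > 0) \<and>
              (rhoZ N p a 0 + rhoZ N p a 2 < 0 \<or>
               rhoZ N p a 0 + rhoZ N p a (int (nclass N p a) - 2) < 0)}"
    define Nf where "Nf = (\<lambda>t::nat. \<kappa> * int t + c)"
    have inS: "Nf t \<in> S" if t: "t \<ge> nat N0" for t
    proof -
      define N where "N = Nf t"
      have "1 * int t \<le> \<kappa> * int t" using kpos by (intro mult_right_mono) auto
      hence tN: "int t \<le> \<kappa> * int t" by simp
      have NN0: "N \<ge> N0" using t tN c0 by (simp add: N_def Nf_def)
      have kap: "gcd (fst p) (snd p) * (2 * int t + 1) = 2*N+1"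
        by (simp add: N_def Nf_def \<kappa>_def[symmetric] c algebra_simps)
      note nn = abs_ge_zero[of "fst a"] abs_ge_zero[of "snd a"] abs_ge_zero[of "fst p"]
        abs_ge_zero[of "snd p"] abs_ge_zero[of "fst a * snd p - snd a * fst p"]
      have ibA: "inbox N a" using NN0 P0 nn unfolding inbox_def N0_def by linarith
      have t1: "\<bar>fst a + 2 * fst p\<bar> \<le> \<bar>fst a\<bar> + 2*\<bar>fst p\<bar>"
        using abs_triangle_ineq[of "fst a" "2*fst p"] by (simp add: abs_mult)
      have t2: "\<bar>snd a + 2 * snd p\<bar> \<le> \<bar>snd a\<bar> + 2*\<bar>snd p\<bar>"
        using abs_triangle_ineq[of "snd a" "2*snd p"] by (simp add: abs_mult)
      have ib2: "inbox N (mode a p 2)" using NN0 P0 nn t1 t2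
        unfolding inbox_def N0_def mode_def fst_conv snd_conv by linarith
      have big: "\<bar>fst a * snd p - snd a * fst p\<bar> + ((fst p)^2 + (snd p)^2) + 1 \<le> 2*N+1"
        using NN0 nn P0 unfolding N0_def P_def[symmetric] by linarith
      note zk = zeit_key[OF ca kap big]
      have ha: "hatN N a = a" using hat_id[OF ibA] .
      have m0: "mode a p 0 = a" by (simp add: mode_def)
      have h2: "hatN N (mode a p 2) = mode a p 2" using hat_id[OF ib2] .
      have Npos: "N > 0" using NN0 P0 nn unfolding N0_def by linarith
      have nz: "hatN N (mode a p k) \<noteq> (0,0)" for k
        using zk[of k] cr(5,6) by (auto simp: nsq_def)
      have z0: "rhoZ N p a 0 = rhoG p a 0" by (simp add: rhoZ_def rhoG_def m0 ha)
      have z2: "rhoZ N p a 2 = rhoG p a 2" by (simp add: rhoZ_def rhoG_def h2)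
      have zk': "rhoZ N p a k > 0" if "1 \<le> k" "k \<le> int (nclass N p a) - 1" for k
      proof -
        have "hatN N (mode a p k) \<noteq> a"
          using nclass_le[of N a p k] that ibA by auto
        hence "nsq (hatN N (mode a p k)) > nsq p" using zk[of k] by auto
        thus ?thesis using cr(5) by (simp add: rhoZ_def frac_less2)
      qed
      show ?thesis unfolding S_def N_def[symmetric]
        using Npos nz z0 z2 cr(1,4) zk' by auto
    qed
    have "inj_on Nf {nat N0..}" using kpos by (auto simp: inj_on_def Nf_def)
    hence "infinite (Nf ` {nat N0..})" by (simp add: finite_image_iff infinite_Ici)
    moreover have "Nf ` {nat N0..} \<subseteq> S" using inS by auto
    ultimately have "infinite S" using infinite_super by blast
    thus "infinite {N :: int. N > 0 \<and>
              (\<forall>k::int. hatN N (mode a p k) \<noteq> (0, 0)) \<and>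
              rhoZ N p a 0 < 0 \<and>
              (\<forall>k::int. 1 \<le> k \<and> k \<le> int (nclass N p a) - 1 \<longrightarrow> rhoZ N p a k > 0) \<and>
              (rhoZ N p a 0 + rhoZ N p a 2 < 0 \<or>
               rhoZ N p a 0 + rhoZ N p a (int (nclass N p a) - 2) < 0)}" by (simp add: S_def)
  qed
  show ?thesis using part1 part2 by blast
qed

end
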